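(* Let $p$ be an odd prime with $p\mid n$, $G=\mathrm{PGL}_n(\mathbb{C})$, and let $\bar A$ be a toral elementary abelian $p$-subgroup of $G$ with $C_G(\bar A)$ connected. Then $\bar A$ has a generating set (an $\mathbb{F}_p$-basis) none of whose elements is $G$-conjugate to $e_{n/p}$.
   Context: Toral: contained in a maximal torus. With $\alpha=e^{2\pi i/p}$ and $n=pk$, $e_{n/p}$ is the image in $G$ of $\mathrm{diag}(I_k,\alpha I_k,\dots,\alpha^{p-1}I_k)$. *)

theory Defs
  imports "HOL-Analysis.Analysis"
begin

text \<open>We model G = PGL_n(C) through GL_n(C) = invertible matrices of type complex^'n^'n,
  with n = CARD('n). A subgroup of G is represented by its full preimage in GL_n(C),
  which is a subgroup containing all nonzero scalar matrices.\<close>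

text \<open>Matrix power (the power operator on vec types is componentwise, so we define our own).\<close>
primrec mpow :: "complex^'n^'n \<Rightarrow> nat \<Rightarrow> complex^'n^'n" where
  "mpow M 0 = mat 1"
| "mpow M (Suc m) = M ** mpow M m"

definition is_scalar :: "complex^'n^'n \<Rightarrow> bool" where
  "is_scalar M \<longleftrightarrow> (\<exists>c. M = mat c)"

definition diagonal_mat :: "complex^'n^'n \<Rightarrow> bool" where
  "diagonal_mat M \<longleftrightarrow> (\<forall>i j. i \<noteq> j \<longrightarrow> M $ i $ j = 0)"

text \<open>A is the preimage in GL_n(C) of a (finite) elementary abelian p-subgroup of PGL_n(C).\<close>
definition elem_abelian_preimage :: "nat \<Rightarrow> (complex^'n^'n) set \<Rightarrow> bool" where
  "elem_abelian_preimage p A \<longleftrightarrow>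
     (\<forall>a\<in>A. invertible a) \<and>
     (\<forall>c. c \<noteq> 0 \<longrightarrow> mat c \<in> A) \<and>
     (\<forall>a\<in>A. \<forall>b\<in>A. a ** b \<in> A) \<and>
     (\<forall>a\<in>A. matrix_inv a \<in> A) \<and>
     (\<forall>a\<in>A. \<forall>b\<in>A. \<exists>c. a ** b = mat c ** (b ** a)) \<and>
     (\<forall>a\<in>A. is_scalar (mpow a p)) \<and>
     (\<exists>F. finite F \<and> A = {mat c ** f | c f. c \<noteq> 0 \<and> f \<in> F})"

text \<open>Toral: contained in a maximal torus of PGL_n(C); all maximal tori are conjugate
  to the image of the diagonal torus.\<close>
definition toral :: "(complex^'n^'n) set \<Rightarrow> bool" where
  "toral A \<longleftrightarrow> (\<exists>g::complex^'n^'n. invertible g \<and> (\<forall>a\<in>A. diagonal_mat (g ** a ** matrix_inv g)))"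

text \<open>Preimage in GL_n(C) of the centralizer C_G(A-bar).\<close>
definition centralizer_preimage :: "(complex^'n^'n) set \<Rightarrow> (complex^'n^'n) set" where
  "centralizer_preimage A =
     {x. invertible x \<and> (\<forall>a\<in>A. \<exists>c. x ** a = mat c ** (a ** x))}"

text \<open>A fixed enumeration of the index type, used to write block-diagonal matrices.\<close>
definition idx_enum :: "'n::finite \<Rightarrow> nat" where
  "idx_enum = (SOME \<sigma>. bij_betw \<sigma> (UNIV::'n set) {..<CARD('n)})"

text \<open>diag(I_k, alpha I_k, ..., alpha^(p-1) I_k), alpha = exp(2 pi i/p), k = n/p.\<close>
definition e_mat :: "nat \<Rightarrow> complex^'n^'n" where
  "e_mat p = (\<chi> i j. if i = j
       then exp (2 * pi * \<i> / of_nat p) ^ (idx_enum i div (CARD('n) div p)) else 0)"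

text \<open>x (in GL_n) represents an element of PGL_n that is G-conjugate to e_{n/p}.\<close>
definition conj_to_e :: "nat \<Rightarrow> complex^'n^'n \<Rightarrow> bool" where
  "conj_to_e p x \<longleftrightarrow>
     (\<exists>(g::complex^'n^'n) c. invertible g \<and> c \<noteq> 0 \<and> x = mat c ** (g ** e_mat p ** matrix_inv g))"

text \<open>The images of the elements of bs in A-bar = A/C^* form an F_p-basis of A-bar:
  every element of A is uniquely (up to scalars) a product of powers with exponents < p.\<close>
definition Fp_basis :: "nat \<Rightarrow> (complex^'n^'n) set \<Rightarrow> (complex^'n^'n) list \<Rightarrow> bool" where
  "Fp_basis p A bs \<longleftrightarrow>
     set bs \<subseteq> A \<and>
     (\<forall>a\<in>A. \<exists>!m::nat \<Rightarrow> nat.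
        (\<forall>i. (i < length bs \<longrightarrow> m i < p) \<and> (i \<ge> length bs \<longrightarrow> m i = 0)) \<and>
        (\<exists>c. a = mat c ** foldr (**) (map (\<lambda>i. mpow (bs ! i) (m i)) [0..<length bs]) (mat 1)))"

end

theory Submission
  imports Defs
begin


lemma mat_mult_entry: "(mat c ** (M::'a::comm_ring_1^'n^'n)) $ i $ j = c * M$i$j"
  unfolding matrix_matrix_mult_def mat_def
  by (simp, subst sum.remove[of _ i], auto)

lemma mult_mat_entry: "((M::'a::comm_ring_1^'n^'n) ** mat c) $ i $ j = M$i$j * c"
  unfolding matrix_matrix_mult_def mat_def
  by (simp, subst sum.remove[of _ j], auto)

lemma mat_comm: "mat c ** (M::'a::comm_ring_1^'n^'n) = M ** mat c"
  by (simp add: vec_eq_iff mat_mult_entry mult_mat_entry mult.commute)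

lemma mat_mat: "mat a ** mat b = (mat (a*b) :: 'a::comm_ring_1^'n^'n)"
  by (simp add: vec_eq_iff mat_mult_entry) (simp add: mat_def)

lemma diag_left: "diagonal_mat D \<Longrightarrow> (D ** M)$i$j = D$i$i * M$i$j"
  unfolding diagonal_mat_def matrix_matrix_mult_def
  by (simp, subst sum.remove[of _ i], auto)

lemma diag_right: "diagonal_mat D \<Longrightarrow> (M ** D)$i$j = M$i$j * D$j$j"
  unfolding diagonal_mat_def matrix_matrix_mult_def
  by (simp, subst sum.remove[of _ j], auto)

lemma diag_mult: "diagonal_mat D \<Longrightarrow> diagonal_mat E \<Longrightarrow> diagonal_mat (D ** E)"
  by (simp add: diagonal_mat_def diag_left)

lemma diag_inv_nz: "diagonal_mat D \<Longrightarrow> invertible D \<Longrightarrow> D$i$i \<noteq> (0::complex)"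
proof
  assume d: "diagonal_mat D" and "invertible D" and z: "D$i$i = 0"
  then obtain D' where "D ** D' = mat 1" unfolding invertible_def by blast
  hence "(D ** D')$i$i = 1" by (simp add: mat_def)
  with d z show False by (simp add: diag_left)
qed

lemma trace_mat_mult: "trace (mat c ** M) = c * trace (M::complex^'n^'n)"
  by (simp add: trace_def mat_mult_entry sum_distrib_left)

lemma continuous_mm: "continuous_on UNIV (\<lambda>y::complex^'n^'n. (y ** a) $ i $ j)"
  unfolding matrix_matrix_mult_def
  by (auto intro!: continuous_intros)

lemma continuous_mm2: "continuous_on UNIV (\<lambda>y::complex^'n^'n. (a ** y) $ i $ j)"
  unfolding matrix_matrix_mult_def
  by (auto intro!: continuous_intros)

lemma closed_comm_set: "closed {y::complex^'n^'n. y ** a = mat z ** (a ** y)}"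
proof -
  have "{y::complex^'n^'n. y ** a = mat z ** (a ** y)} = (\<Inter>i. \<Inter>j. {y. (y ** a) $ i $ j = z * (a ** y) $ i $ j})"
    by (auto simp: vec_eq_iff mat_mult_entry)
  moreover have "closed {y. (y ** a) $ i $ j = z * (a ** y) $ i $ j}" for i j
    by (intro closed_Collect_eq continuous_mm continuous_on_mult continuous_on_const continuous_mm2)
  ultimately show ?thesis by (simp add: closed_INT)
qed




definition bnd :: "nat \<Rightarrow> nat \<Rightarrow> (nat \<Rightarrow> nat) \<Rightarrow> bool" where
  "bnd p L m \<longleftrightarrow> (\<forall>i. (i < L \<longrightarrow> m i < p) \<and> (i \<ge> L \<longrightarrow> m i = 0))"

definition lprod :: "'a::comm_monoid_mult list \<Rightarrow> (nat \<Rightarrow> nat) \<Rightarrow> 'a" where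
  "lprod bs m = (\<Prod>i<length bs. (bs!i)^(m i))"

definition spn :: "nat \<Rightarrow> 'a::comm_monoid_mult list \<Rightarrow> 'a set" where
  "spn p bs = {lprod bs m | m. bnd p (length bs) m}"

definition indep :: "nat \<Rightarrow> 'a::comm_monoid_mult list \<Rightarrow> bool" where
  "indep p bs \<longleftrightarrow> (\<forall>m m'. bnd p (length bs) m \<longrightarrow> bnd p (length bs) m' \<longrightarrow> lprod bs m = lprod bs m' \<longrightarrow> m = m')"

lemma lprod_append1: "lprod (bs@[t]) m = lprod bs m * t ^ m (length bs)"
  unfolding lprod_def by (simp add: nth_append)

lemma lprod_append_zero:
  assumes "\<forall>i\<ge>length bs. m i = 0" shows "lprod (bs@cs) m = lprod bs m"
proof -
  have "lprod (bs@cs) m = (\<Prod>i\<in>{..<length bs} \<union> {length bs..<length bs + length cs}. ((bs@cs)!i)^(m i))"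
    unfolding lprod_def by (intro prod.cong) auto
  also have "\<dots> = (\<Prod>i<length bs. ((bs@cs)!i)^(m i)) * (\<Prod>i\<in>{length bs..<length bs + length cs}. ((bs@cs)!i)^(m i))"
    by (intro prod.union_disjoint) auto
  also have "(\<Prod>i\<in>{length bs..<length bs + length cs}. ((bs@cs)!i)^(m i)) = 1"
    using assms by (intro prod.neutral) auto
  finally show ?thesis unfolding lprod_def by (simp add: nth_append)
qed

locale pgrp =
  fixes G :: "'a::comm_monoid_mult set" and p :: nat
  assumes fin: "finite G" and one: "1 \<in> G" and cl: "\<And>u v. u \<in> G \<Longrightarrow> v \<in> G \<Longrightarrow> u * v \<in> G"
    and pw: "\<And>u. u \<in> G \<Longrightarrow> u ^ p = 1" and pr: "prime p"
begin

lemma p_pos: "p > 0" using pr prime_gt_0_nat by blast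
lemma p_gt1: "p > 1" using pr prime_gt_1_nat by blast

lemma pow_in: "u \<in> G \<Longrightarrow> u ^ k \<in> G"
  by (induction k) (auto simp: one cl)

lemma prod_in: "finite I \<Longrightarrow> (\<And>i. i \<in> I \<Longrightarrow> f i \<in> G) \<Longrightarrow> prod f I \<in> G"
  by (induction I rule: finite_induct) (auto simp: one cl)

lemma pow_mod: "u \<in> G \<Longrightarrow> u ^ n = u ^ (n mod p)"
proof -
  assume u: "u \<in> G"
  have "u ^ n = u ^ (p * (n div p) + n mod p)" by simp
  also have "\<dots> = (u^p)^(n div p) * u^(n mod p)" by (simp only: power_add power_mult)
  finally show ?thesis using pw[OF u] by simp
qed

lemma cancel: "u \<in> G \<Longrightarrow> u * v = u * w \<Longrightarrow> v = w"
proof -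
  assume u: "u \<in> G" and e: "u * v = u * w"
  have "u ^ (p - 1) * u = 1" using pw[OF u] p_pos
    by (metis One_nat_def Suc_pred mult.commute power_Suc)
  hence "u ^ (p - 1) * (u * v) = v" "u ^ (p - 1) * (u * w) = w" by (simp_all add: mult.assoc[symmetric])
  with e show ?thesis by simp
qed

lemma lprod_in: "set bs \<subseteq> G \<Longrightarrow> lprod bs m \<in> G"
  unfolding lprod_def by (intro prod_in) (auto intro!: pow_in)

lemma spn_sub: "set bs \<subseteq> G \<Longrightarrow> spn p bs \<subseteq> G"
  unfolding spn_def using lprod_in by blast

lemma lprod_mult: "set bs \<subseteq> G \<Longrightarrow> lprod bs m * lprod bs m' = lprod bs (\<lambda>i. (m i + m' i) mod p)"
  unfolding lprod_def prod.distrib[symmetric]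
proof (intro prod.cong refl)
  fix i assume "set bs \<subseteq> G" "i \<in> {..<length bs}"
  hence "bs ! i \<in> G" by auto
  thus "bs ! i ^ m i * bs ! i ^ m' i = bs ! i ^ ((m i + m' i) mod p)"
    by (simp add: power_add[symmetric] pow_mod[symmetric])
qed

lemma bnd_add: "bnd p L m \<Longrightarrow> bnd p L m' \<Longrightarrow> bnd p L (\<lambda>i. (m i + m' i) mod p)"
  unfolding bnd_def using p_pos by auto

lemma one_spn: "1 \<in> spn p bs"
  unfolding spn_def mem_Collect_eq by (rule exI[of _ "\<lambda>_. 0"]) (simp add: lprod_def bnd_def p_pos)

lemma spn_mult: "set bs \<subseteq> G \<Longrightarrow> u \<in> spn p bs \<Longrightarrow> v \<in> spn p bs \<Longrightarrow> u * v \<in> spn p bs"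
  unfolding spn_def using lprod_mult bnd_add by blast

lemma spn_pow: "set bs \<subseteq> G \<Longrightarrow> u \<in> spn p bs \<Longrightarrow> u ^ k \<in> spn p bs"
  by (induction k) (auto simp: one_spn spn_mult)

lemma root_in:
  assumes S: "set bs \<subseteq> G" and t: "t \<in> G" and j: "0 < j" "j < p" and tj: "t ^ j \<in> spn p bs"
  shows "t \<in> spn p bs"
proof -
  have "coprime j p" using pr j
    by (metis coprime_commute le_eq_less_or_eq not_le prime_imp_coprime_nat nat_dvd_not_less)
  hence "gcd j p = 1" by simp
  obtain x y where xy: "j * x = p * y + gcd j p" using bezout_nat[of j p] j by auto
  hence "j * x = p * y + 1" using \<open>gcd j p = 1\<close> by simp
  have "(t ^ j) ^ x = t ^ (p * y + 1)" using xy \<open>gcd j p = 1\<close> by (simp add: power_mult[symmetric])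
  also have "\<dots> = t" using pw[OF t(1)] by (simp add: power_add power_mult)
  finally show ?thesis using spn_pow[OF S tj, of x] by simp
qed

lemma bnd_restrict: "bnd p (Suc L) m \<Longrightarrow> bnd p L (m(L:=0))"
  unfolding bnd_def by auto

lemma lprod_upd: "lprod bs (m(length bs := k)) = lprod bs m"
  unfolding lprod_def by (intro prod.cong) auto

lemma ext_indep:
  assumes S: "set bs \<subseteq> G" and I: "indep p bs" and t: "t \<in> G" "t \<notin> spn p bs"
  shows "indep p (bs@[t])"
  unfolding indep_def
proof (intro allI impI)
  fix m m' assume b: "bnd p (length (bs@[t])) m" and b': "bnd p (length (bs@[t])) m'"
    and e: "lprod (bs @ [t]) m = lprod (bs @ [t]) m'"
  define L where "L = length bs"
  define k where "k = m L"
  define k' where "k' = m' L"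
  have kp: "k < p" "k' < p" using b b' unfolding bnd_def k_def k'_def L_def by auto
  have e2: "lprod bs m * t ^ k = lprod bs m' * t ^ k'"
    using e unfolding lprod_append1 k_def k'_def L_def .
  have key: "k = k'" if kk: "k < p" "k' < p" "k' < k" and bm: "bnd p (length bs) m" and bm': "bnd p (length bs) m'" and ee: "lprod bs m * t ^ k = lprod bs m' * t ^ k'" for m m' k k'
  proof -
    have "lprod bs m * t ^ (k + (p - k)) = lprod bs m' * t ^ (k' + (p - k))" using ee
      by (simp add: power_add mult.assoc[symmetric])
    moreover have "k + (p - k) = p" "k' + (p - k) = p - (k - k')" using kk by arith+
    ultimately have "lprod bs m * t ^ p = lprod bs m' * t ^ (p - (k - k'))" by simp
    hence eq: "lprod bs m = lprod bs m' * t ^ (p - (k - k'))" using pw[OF t(1)] by simp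
    have "lprod bs m * lprod bs m' ^ (p - 1) = t ^ (p - (k - k')) * (lprod bs m' ^ (p - 1) * lprod bs m')"
      unfolding eq by (simp add: ac_simps)
    also have "lprod bs m' ^ (p - 1) * lprod bs m' = 1" using pw[OF lprod_in[OF S]] p_pos
      by (metis One_nat_def Suc_pred power_Suc2)
    finally have eq2: "lprod bs m * lprod bs m' ^ (p - 1) = t ^ (p - (k - k'))" by simp
    have "lprod bs m \<in> spn p bs" "lprod bs m' \<in> spn p bs"
      using bm bm' unfolding spn_def by auto
    hence "lprod bs m * lprod bs m' ^ (p - 1) \<in> spn p bs"
      using S spn_mult spn_pow by blast
    hence "t ^ (p - (k - k')) \<in> spn p bs" using eq2 by simp
    moreover have "0 < p - (k - k')" "p - (k - k') < p" using kk by arith+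
    ultimately have "t \<in> spn p bs" using root_in[OF S t(1)] by blast
    with t show ?thesis by simp
  qed
  have kk: "k = k'"
  proof (rule ccontr)
    assume "k \<noteq> k'"
    hence "k' < k \<or> k < k'" by auto
    moreover have "bnd p (length bs) (m(L:=0))" "bnd p (length bs) (m'(L:=0))"
      using bnd_restrict b b' unfolding L_def by auto
    moreover note e3 = e2[folded lprod_upd[of bs m 0] lprod_upd[of bs m' 0], folded L_def]
    ultimately show False using key[OF kp(1) kp(2) _ _ _ e3] key[OF kp(2) kp(1) _ _ _ e3[symmetric]] \<open>k \<noteq> k'\<close> by auto
  qed
  have "lprod bs m * t ^ k * t ^ (p - k) = lprod bs m' * t ^ k * t ^ (p - k)" using e2 kk by simp
  hence "lprod bs m * t ^ p = lprod bs m' * t ^ p" using kp by (simp add: mult.assoc power_add[symmetric])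
  hence "lprod bs m = lprod bs m'" using pw[OF t(1)] by simp
  hence "lprod bs (m(L:=0)) = lprod bs (m'(L:=0))" unfolding L_def lprod_upd .
  hence "m(L:=0) = m'(L:=0)" using I bnd_restrict b b' unfolding indep_def L_def by simp
  thus "m = m'" using kk unfolding k_def k'_def by (metis fun_upd_idem fun_upd_upd)
qed

lemma spn_grow:
  assumes S: "set bs \<subseteq> G" and t: "t \<notin> spn p bs"
  shows "spn p bs \<subset> spn p (bs@[t])"
proof -
  have "spn p bs \<subseteq> spn p (bs@[t])"
  proof
    fix u assume "u \<in> spn p bs"
    then obtain m where m: "bnd p (length bs) m" "u = lprod bs m" unfolding spn_def by auto
    hence "bnd p (length (bs@[t])) m" unfolding bnd_def using p_pos
      by (metis length_append_singleton less_Suc_eq not_le)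
    moreover have "lprod (bs@[t]) m = u" using m unfolding lprod_append1 bnd_def by auto
    ultimately show "u \<in> spn p (bs@[t])" unfolding spn_def by blast
  qed
  moreover have "t \<in> spn p (bs@[t])"
  proof -
    define m where "m = (\<lambda>i. if i = length bs then 1 else (0::nat))"
    have "bnd p (length (bs@[t])) m" unfolding bnd_def m_def using p_gt1 by auto
    moreover have "lprod bs m = 1" unfolding lprod_def m_def by (intro prod.neutral) auto
    hence "lprod (bs@[t]) m = t" unfolding lprod_append1 by (simp add: m_def)
    ultimately show ?thesis unfolding spn_def by force
  qed
  ultimately show ?thesis using t by blast
qed

lemma greedy:
  assumes "T \<subseteq> G"
  shows "set bs \<subseteq> G \<Longrightarrow> indep p bs \<Longrightarrow> \<exists>cs. set cs \<subseteq> T \<and> indep p (bs@cs) \<and> T \<subseteq> spn p (bs@cs)"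
proof (induction "card G - card (spn p bs)" arbitrary: bs rule: less_induct)
  case less
  show ?case
  proof (cases "T \<subseteq> spn p bs")
    case True
    then show ?thesis using less.prems by (intro exI[of _ "[]"]) auto
  next
    case False
    then obtain t where t: "t \<in> T" "t \<notin> spn p bs" by blast
    have tG: "t \<in> G" using t assms by blast
    have S': "set (bs@[t]) \<subseteq> G" using less.prems tG by auto
    have I': "indep p (bs@[t])" using ext_indep[OF less.prems tG t(2)] .
    have "card (spn p bs) < card (spn p (bs@[t]))"
      using spn_grow[OF less.prems(1) t(2)] spn_sub[OF S'] fin
      by (meson psubset_card_mono rev_finite_subset)
    moreover have "card (spn p (bs@[t])) \<le> card G" using spn_sub[OF S'] fin by (simp add: card_mono)
    ultimately have "card G - card (spn p (bs@[t])) < card G - card (spn p bs)" by arith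
    from less.hyps[OF this S' I'] obtain cs where
      "set cs \<subseteq> T" "indep p ((bs@[t])@cs)" "T \<subseteq> spn p ((bs@[t])@cs)" by blast
    thus ?thesis using t by (intro exI[of _ "t#cs"]) auto
  qed
qed

lemma indep_nil: "indep p []"
  unfolding indep_def bnd_def by auto

lemma basis_or_char:
  fixes \<omega> :: complex
  assumes T: "T \<subseteq> G" and om: "\<omega> ^ p = 1" "\<omega> \<noteq> 1"
  shows "(\<exists>cs. set cs \<subseteq> T \<and> indep p cs \<and> G \<subseteq> spn p cs) \<or>
    (\<exists>lmb::'a \<Rightarrow> complex. (\<forall>u\<in>G. \<forall>v\<in>G. lmb (u * v) = lmb u * lmb v) \<and> (\<forall>u\<in>G. lmb u ^ p = 1) \<and>
       (\<forall>u\<in>T. lmb u = 1) \<and> (\<exists>u\<in>G. lmb u \<noteq> 1))"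
proof (cases "\<exists>cs. set cs \<subseteq> T \<and> indep p cs \<and> G \<subseteq> spn p cs")
  case True thus ?thesis by blast
next
  case False
  obtain cs where cs: "set cs \<subseteq> T" "indep p cs" "T \<subseteq> spn p cs"
    using greedy[OF T, of "[]"] indep_nil by auto
  have csG: "set cs \<subseteq> G" using cs T by auto
  obtain ds where ds: "set ds \<subseteq> G" "indep p (cs@ds)" "G \<subseteq> spn p (cs@ds)"
    using greedy[of G cs] csG cs by auto
  have "ds \<noteq> []" using ds False cs by auto
  define full where "full = cs @ ds"
  define L where "L = length full"
  have L: "L - 1 \<ge> length cs" "L - 1 < L" using \<open>ds \<noteq> []\<close> unfolding L_def full_def
    by (auto simp: length_greater_0_conv[symmetric] simp del: length_greater_0_conv)
  have fG: "set full \<subseteq> G" using csG ds unfolding full_def by auto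
  have ex1: "\<exists>!m. bnd p L m \<and> lprod full m = u" if u: "u \<in> G" for u
  proof -
    obtain m where "bnd p L m" "lprod full m = u" using ds(3) u unfolding spn_def full_def L_def by auto
    moreover have "m' = m" if "bnd p L m'" "lprod full m' = u" for m'
      using ds(2) that \<open>bnd p L m\<close> \<open>lprod full m = u\<close> unfolding indep_def full_def L_def by metis
    ultimately show ?thesis by blast
  qed
  define M where "M u = (THE m. bnd p L m \<and> lprod full m = u)" for u
  have M: "bnd p L (M u) \<and> lprod full (M u) = u" if "u \<in> G" for u
    unfolding M_def using theI'[OF ex1[OF that]] by simp
  have Muniq: "M u = m" if "u \<in> G" "bnd p L m" "lprod full m = u" for u m
    using ex1[OF that(1)] M[OF that(1)] that by blast
  define lmb where "lmb u = \<omega> ^ (M u (L - 1))" for u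
  have ompow: "\<omega> ^ n = \<omega> ^ (n mod p)" for n
  proof -
    have "\<omega> ^ n = \<omega> ^ (p * (n div p) + n mod p)" by simp
    also have "\<dots> = (\<omega>^p)^(n div p) * \<omega>^(n mod p)" by (simp only: power_add power_mult)
    finally show ?thesis using om by simp
  qed
  have "\<forall>u\<in>G. \<forall>v\<in>G. lmb (u * v) = lmb u * lmb v"
  proof (intro ballI)
    fix u v assume u: "u \<in> G" and v: "v \<in> G"
    have b: "bnd p L (\<lambda>i. (M u i + M v i) mod p)" using bnd_add M[OF u] M[OF v] by blast
    have l: "lprod full (\<lambda>i. (M u i + M v i) mod p) = u * v"
      using lprod_mult[OF fG, of "M u" "M v"] M[OF u] M[OF v] by simp
    have "M (u * v) = (\<lambda>i. (M u i + M v i) mod p)"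
      using Muniq[OF cl[OF u v] b l] .
    thus "lmb (u * v) = lmb u * lmb v" unfolding lmb_def by (simp add: ompow[symmetric] power_add)
  qed
  moreover have "\<forall>u\<in>G. lmb u ^ p = 1"
    unfolding lmb_def by (simp add: power_mult[symmetric] mult.commute[of _ p] power_mult om)
  moreover have "\<forall>u\<in>T. lmb u = 1"
  proof
    fix u assume uT: "u \<in> T"
    then obtain m where m: "bnd p (length cs) m" "lprod cs m = u" using cs(3) unfolding spn_def by auto
    have "bnd p L m" unfolding bnd_def
    proof (intro allI conjI impI)
      fix i assume "i < L" thus "m i < p" using m(1) p_pos unfolding bnd_def by (cases "i < length cs") auto
    next
      fix i assume "L \<le> i" thus "m i = 0" using m(1) L unfolding bnd_def by auto
    qed
    moreover have "lprod full m = u" using m unfolding full_def bnd_def by (simp add: lprod_append_zero)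
    ultimately have "M u = m" using Muniq uT T by blast
    thus "lmb u = 1" unfolding lmb_def using m(1) L unfolding bnd_def by auto
  qed
  moreover have "\<exists>u\<in>G. lmb u \<noteq> 1"
  proof -
    define m where "m = (\<lambda>i. if i = L - 1 then 1 else (0::nat))"
    define t where "t = lprod full m"
    have tG: "t \<in> G" unfolding t_def using lprod_in[OF fG] .
    have "bnd p L m" unfolding bnd_def m_def using p_gt1 L by auto
    hence "M t = m" using Muniq tG unfolding t_def by blast
    hence "lmb t = \<omega>" unfolding lmb_def m_def by simp
    thus ?thesis using tG om by auto
  qed
  ultimately show ?thesis by (intro disjI2 exI[of _ lmb]) (simp only: conj_assoc)
qed

end



lemma vec_pow_nth: "((u::'a::comm_monoid_mult^'n)^k)$i = (u$i)^k"
  by (induction k) auto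

lemma orth:
  assumes P: "pgrp G p" and chi: "\<forall>u\<in>G. \<forall>v\<in>G. chi (u * v) = chi u * chi v"
    and v: "v \<in> G" "chi v \<noteq> (1::complex)"
  shows "(\<Sum>u\<in>G. chi u) = 0"
proof -
  interpret pgrp G p by (rule P)
  have vinv: "v * v^(p-1) = 1" using pw[OF v(1)] p_pos
    by (metis One_nat_def Suc_pred power_Suc)
  have bij: "bij_betw ((*) v) G G"
    unfolding bij_betw_def
  proof
    show "inj_on ((*) v) G" using cancel[OF v(1)] by (auto simp: inj_on_def)
    show "(*) v ` G = G"
    proof
      show "(*) v ` G \<subseteq> G" using cl v by auto
      show "G \<subseteq> (*) v ` G"
      proof
        fix w assume w: "w \<in> G"
        have "w = v * (v^(p-1) * w)" using vinv by (simp add: mult.assoc[symmetric])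
        moreover have "v^(p-1) * w \<in> G" using cl pow_in v w by blast
        ultimately show "w \<in> (*) v ` G" by blast
      qed
    qed
  qed
  have "(\<Sum>u\<in>G. chi u) = (\<Sum>u\<in>G. chi (v * u))"
    using sum.reindex_bij_betw[OF bij, of chi] by simp
  also have "\<dots> = chi v * (\<Sum>u\<in>G. chi u)"
    using chi v by (simp add: sum_distrib_left)
  finally have "(chi v - 1) * (\<Sum>u\<in>G. chi u) = 0" by (simp add: algebra_simps)
  thus ?thesis using v by simp
qed

lemma count_lemma:
  fixes G :: "(complex^'n) set"
  assumes P: "pgrp G p" and nz: "\<forall>u\<in>G. \<forall>i. u$i \<noteq> 0"
    and psi: "\<forall>u\<in>G. \<forall>v\<in>G. psi (u * v) = psi u * psi v" "\<forall>u\<in>G. psi u \<noteq> 0"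
  shows "(\<Sum>u\<in>G. (\<Sum>j\<in>UNIV. u$j) / psi u) = of_nat (card G) * of_nat (card {j. \<forall>u\<in>G. u$j = psi u})"
proof -
  interpret pgrp G p by (rule P)
  have one: "\<And>j. (\<Sum>u\<in>G. u$j / psi u) = (if (\<forall>u\<in>G. u$j = psi u) then of_nat (card G) else 0)"
  proof -
    fix j
    show "(\<Sum>u\<in>G. u$j / psi u) = (if (\<forall>u\<in>G. u$j = psi u) then of_nat (card G) else 0)"
    proof (cases "\<forall>u\<in>G. u$j = psi u")
      case True
      hence "(\<Sum>u\<in>G. u$j / psi u) = (\<Sum>u\<in>G. 1)" using psi by (intro sum.cong) auto
      thus ?thesis using True by simp
    next
      case False
      then obtain v where v: "v \<in> G" "v$j \<noteq> psi v" by blast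
      have "(\<Sum>u\<in>G. u$j / psi u) = 0"
      proof (rule orth[OF P, of "\<lambda>u. u$j / psi u" v])
        show "\<forall>u\<in>G. \<forall>w\<in>G. (u * w)$j / psi (u * w) = u$j / psi u * (w$j / psi w)"
          using psi by auto
        show "v \<in> G" by fact
        show "v$j / psi v \<noteq> 1" using v psi by auto
      qed
      thus ?thesis using False by auto
    qed
  qed
  have "(\<Sum>u\<in>G. (\<Sum>j\<in>UNIV. u$j) / psi u) = (\<Sum>j\<in>UNIV. \<Sum>u\<in>G. u$j / psi u)"
    by (simp add: sum_divide_distrib sum.swap[of _ G])
  also have "\<dots> = (\<Sum>j\<in>UNIV. if (\<forall>u\<in>G. u$j = psi u) then of_nat (card G) else 0)"
    using one by simp
  also have "\<dots> = of_nat (card G) * of_nat (card {j. \<forall>u\<in>G. u$j = psi u})"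
    by (simp add: sum.If_cases)
  finally show ?thesis .
qed

lemma fourier_count:
  fixes G :: "(complex^'n) set"
  assumes P: "pgrp G p" and nz: "\<forall>u\<in>G. \<forall>i. u$i \<noteq> 0"
    and lm: "\<forall>u\<in>G. \<forall>v\<in>G. lmb (u * v) = lmb u * lmb v" "\<forall>u\<in>G. lmb u ^ p = 1"
    and S: "\<forall>u\<in>G. (\<Sum>j\<in>UNIV. u$j) \<noteq> 0 \<longrightarrow> lmb u = 1"
  shows "card {j. \<forall>u\<in>G. u$j = lmb u * u$i} = card {j. \<forall>u\<in>G. u$j = u$i}"
proof -
  interpret pgrp G p by (rule P)
  have lnz: "\<forall>u\<in>G. lmb u \<noteq> 0" using lm(2) p_pos by (metis power_0_left less_not_refl zero_neq_one)
  have c1: "(\<Sum>u\<in>G. (\<Sum>j\<in>UNIV. u$j) / (lmb u * u$i)) = of_nat (card G) * of_nat (card {j. \<forall>u\<in>G. u$j = lmb u * u$i})"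
    by (rule count_lemma[OF P nz]) (use lm lnz nz in auto)
  have c0: "(\<Sum>u\<in>G. (\<Sum>j\<in>UNIV. u$j) / (u$i)) = of_nat (card G) * of_nat (card {j. \<forall>u\<in>G. u$j = u$i})"
    by (rule count_lemma[OF P nz]) (use nz in auto)
  have "(\<Sum>u\<in>G. (\<Sum>j\<in>UNIV. u$j) / (lmb u * u$i)) = (\<Sum>u\<in>G. (\<Sum>j\<in>UNIV. u$j) / (u$i))"
  proof (intro sum.cong refl)
    fix u assume "u \<in> G"
    thus "(\<Sum>j\<in>UNIV. u$j) / (lmb u * u$i) = (\<Sum>j\<in>UNIV. u$j) / (u$i)"
      using S by (cases "(\<Sum>j\<in>UNIV. u$j) = 0") auto
  qed
  hence "(of_nat (card G) :: complex) * of_nat (card {j. \<forall>u\<in>G. u$j = lmb u * u$i}) = of_nat (card G) * of_nat (card {j. \<forall>u\<in>G. u$j = u$i})"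
    using c1 c0 by simp
  moreover have "card G \<noteq> 0" using fin one by auto
  ultimately show ?thesis by simp
qed

lemma perm_exists:
  fixes G :: "(complex^'n) set"
  assumes lnz: "\<forall>u\<in>G. lmb u \<noteq> (0::complex)"
    and C: "\<forall>i. card {j. \<forall>u\<in>G. u$j = lmb u * u$i} = card {j. \<forall>u\<in>G. u$j = u$i}"
  shows "\<exists>\<pi>. bij \<pi> \<and> (\<forall>i. \<forall>u\<in>G. u$(\<pi> i) = lmb u * u$i)"
proof -
  define R where "R i = {j. \<forall>u\<in>G. u$j = u$i}" for i
  define T where "T i = {j. \<forall>u\<in>G. u$j = lmb u * u$i}" for i
  define B where "B i = (SOME b. bij_betw b (R i) (T i))" for i
  have Bb: "bij_betw (B i) (R i) (T i)" for i
  proof -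
    have "\<exists>b. bij_betw b (R i) (T i)"
      using finite_same_card_bij[of "R i" "T i"] C unfolding R_def T_def by auto
    thus ?thesis unfolding B_def by (rule someI_ex)
  qed
  define \<pi> where "\<pi> i = B i i" for i
  have iR: "i \<in> R i" for i unfolding R_def by auto
  have piT: "\<pi> i \<in> T i" for i unfolding \<pi>_def using Bb[of i] iR[of i] by (auto simp: bij_betw_def)
  have "inj \<pi>"
  proof (rule injI)
    fix i i' assume e: "\<pi> i = \<pi> i'"
    have "\<forall>u\<in>G. u$i = u$i'"
      using piT[of i] piT[of i'] e lnz unfolding T_def by auto
    hence RR: "R i = R i'" and TT: "T i = T i'" and i': "i' \<in> R i"
      unfolding R_def T_def by auto
    have "B i = B i'" unfolding B_def RR TT ..
    hence "B i i = B i i'" using e unfolding \<pi>_def by simp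
    thus "i = i'" using Bb[of i] iR[of i] i' by (auto simp: bij_betw_def inj_on_def)
  qed
  hence "bij \<pi>" using finite_UNIV_inj_surj[of \<pi>] by (simp add: bij_def)
  moreover have "\<forall>i. \<forall>u\<in>G. u$(\<pi> i) = lmb u * u$i" using piT unfolding T_def by auto
  ultimately show ?thesis by blast
qed




lemma inv_lr: "invertible (a::complex^'n^'n) \<Longrightarrow> a ** matrix_inv a = mat 1 \<and> matrix_inv a ** a = mat 1"
  unfolding invertible_def matrix_inv_def by (rule someI_ex)

lemma prod_list_upt: "prod_list (map f [0..<L]) = (\<Prod>i<L. f i)"
  by (induction L) (auto simp: prod.lessThan_Suc mult.commute)

lemma sum_div_blocks: "(\<Sum>m<q * k. f (m div k)) = of_nat k * (\<Sum>j<q. (f j :: complex))"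
proof (induction q)
  case 0 then show ?case by simp
next
  case (Suc q)
  have U: "{..<Suc q * k} = {..<q * k} \<union> {q * k..<q * k + k}" by auto
  have "(\<Sum>m<Suc q * k. f (m div k)) = (\<Sum>m\<in>{..<q * k} \<union> {q * k..<q * k + k}. f (m div k))"
    by (simp only: U)
  also have "\<dots> = (\<Sum>m<q * k. f (m div k)) + (\<Sum>m\<in>{q * k..<q * k + k}. f (m div k))"
    by (rule sum.union_disjoint) auto
  also have "(\<Sum>m\<in>{q * k..<q * k + k}. f (m div k)) = (\<Sum>m\<in>{q * k..<q * k + k}. f q)"
  proof (intro sum.cong refl)
    fix m assume "m \<in> {q * k..<q * k + k}"
    hence "m div k = q" by (auto intro!: div_nat_eqI simp: algebra_simps)
    thus "f (m div k) = f q" by simp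
  qed
  finally show ?case using Suc by (simp add: algebra_simps)
qed

lemma idx_bij: "bij_betw (idx_enum :: 'n::finite \<Rightarrow> nat) UNIV {..<CARD('n)}"
proof -
  have "\<exists>h::'n \<Rightarrow> nat. bij_betw h UNIV {..<CARD('n)}"
    using ex_bij_betw_finite_nat[of "UNIV::'n set"] by (auto simp: atLeast0LessThan)
  thus ?thesis unfolding idx_enum_def by (rule someI_ex)
qed

lemma omega_props:
  assumes "prime p"
  shows "exp (2 * pi * \<i> / of_nat p) ^ p = 1" "exp (2 * pi * \<i> / of_nat p) \<noteq> 1"
proof -
  have p1: "1 \<le> p" "p \<noteq> 0" using assms prime_gt_0_nat by (auto simp: Suc_le_eq)
  have "exp (2 * pi * \<i> / of_nat p) ^ p = exp (2 * pi * \<i> / of_nat p * of_nat p)"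
    by (simp only: exp_of_nat2_mult)
  also have "\<dots> = exp (2 * pi * \<i>)" using p1 by simp
  also have "\<dots> = 1" by (simp add: exp_two_pi_i)
  finally show "exp (2 * pi * \<i> / of_nat p) ^ p = 1" .
  have "exp (2 * complex_of_real pi * \<i> * of_nat 1 / of_nat p) \<noteq> 1"
    using complex_root_unity_eq_1[OF p1(1), of 1] assms by (simp add: prime_nat_iff)
  thus "exp (2 * pi * \<i> / of_nat p) \<noteq> 1" by simp
qed

lemma trace_e:
  assumes "prime p" "p dvd CARD('n)"
  shows "trace (e_mat p :: complex^'n^'n) = 0"
proof -
  define \<omega> where "\<omega> = exp (2 * pi * \<i> / of_nat p)"
  define k where "k = CARD('n) div p"
  have n: "CARD('n) = p * k" using assms unfolding k_def by simp
  have "trace (e_mat p :: complex^'n^'n) = (\<Sum>i\<in>UNIV. \<omega> ^ (idx_enum (i::'n) div k))"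
    unfolding trace_def e_mat_def \<omega>_def k_def by simp
  also have "\<dots> = (\<Sum>m<CARD('n). \<omega> ^ (m div k))"
    using sum.reindex_bij_betw[OF idx_bij, of "\<lambda>m. \<omega> ^ (m div k)"] by simp
  also have "\<dots> = of_nat k * (\<Sum>j<p. \<omega> ^ j)" unfolding n using sum_div_blocks[where q=p and k=k and f="\<lambda>j. \<omega>^j"] by simp
  also have "(\<Sum>j<p. \<omega> ^ j) = 0"
    using geometric_sum[of \<omega> p] omega_props[OF assms(1)] unfolding \<omega>_def by simp
  finally show ?thesis by simp
qed

lemma trace_conj: "invertible (h::complex^'n^'n) \<Longrightarrow> trace (h ** e ** matrix_inv h) = trace e"
  by (metis inv_lr matrix_mul_assoc matrix_mul_lid trace_mul_sym)

lemma conj_trace: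
  assumes "prime p" "p dvd CARD('n)" "conj_to_e p (b::complex^'n^'n)"
  shows "trace b = 0"
  using assms(3) unfolding conj_to_e_def
  by (auto simp: trace_mat_mult trace_conj trace_e[OF assms(1,2)])




lemma mpow_diag:
  assumes "diagonal_mat D"
  shows "diagonal_mat (mpow D k) \<and> (\<forall>i. mpow D k $ i $ i = (D$i$i)^k)"
proof (induction k)
  case 0 then show ?case by (simp add: diagonal_mat_def mat_def)
next
  case (Suc k)
  then show ?case using assms by (simp add: diag_mult diag_left)
qed

lemma inv_nonzero: "invertible (y::complex^'n^'n) \<Longrightarrow> \<exists>i j. y$i$j \<noteq> 0"
proof (rule ccontr)
  assume "invertible y" "\<not> (\<exists>i j. y$i$j \<noteq> 0)"
  hence "y = 0" by (simp add: vec_eq_iff)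
  with \<open>invertible y\<close> obtain y' where "y ** y' = mat 1" unfolding invertible_def by blast
  hence "(mat 1 :: complex^'n^'n) = 0" using \<open>y = 0\<close> by simp
  hence "(mat 1 :: complex^'n^'n) $ undefined $ undefined = 0" by simp
  thus False by (simp add: mat_def)
qed

lemma scalar_eq_cancel:
  assumes "invertible (y::complex^'n^'n)" "mat a ** y = mat b ** y" shows "a = b"
proof -
  obtain i j where "y$i$j \<noteq> 0" using inv_nonzero[OF assms(1)] by blast
  moreover have "a * y$i$j = b * y$i$j" using arg_cong[OF assms(2), of "\<lambda>M. M$i$j"] by (simp add: mat_mult_entry)
  ultimately show ?thesis by simp
qed

lemma mpow_comm:
  assumes "y ** a = mat c ** (a ** (y::complex^'n^'n))"
  shows "y ** mpow a k = mat (c^k) ** (mpow a k ** y)"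
proof (induction k)
  case 0 then show ?case by (simp add: mat_comm)
next
  case (Suc k)
  have "y ** mpow a (Suc k) = (y ** a) ** mpow a k" by (simp add: matrix_mul_assoc)
  also have "\<dots> = mat c ** a ** (y ** mpow a k)" using assms by (simp add: matrix_mul_assoc)
  also have "\<dots> = mat c ** a ** (mat (c^k) ** (mpow a k ** y))" using Suc by simp
  also have "\<dots> = mat c ** mat (c^k) ** (a ** mpow a k ** y)"
    by (metis mat_comm matrix_mul_assoc)
  also have "\<dots> = mat (c^Suc k) ** (mpow a (Suc k) ** y)" by (simp add: mat_mat matrix_mul_assoc)
  finally show ?case .
qed

locale msetup =
  fixes p :: nat and A :: "(complex^'n^'n) set" and g :: "complex^'n^'n"
  assumes pr: "prime p" and EA: "elem_abelian_preimage p A" and ginv: "invertible g"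
    and gdiag: "\<forall>a\<in>A. diagonal_mat (g ** a ** matrix_inv g)"
begin

definition gi where "gi = matrix_inv g"
definition dg where "dg a = g ** a ** gi"
definition i0 :: 'n where "i0 = undefined"
definition nu :: "complex^'n^'n \<Rightarrow> complex^'n" where "nu a = (\<chi> i. dg a $ i $ i / dg a $ i0 $ i0)"

lemma g_lr: "g ** gi = mat 1" "gi ** g = mat 1" using inv_lr[OF ginv] unfolding gi_def by auto

lemma A_inv: "a \<in> A \<Longrightarrow> invertible a" using EA unfolding elem_abelian_preimage_def by auto
lemma A_mat: "c \<noteq> 0 \<Longrightarrow> mat c \<in> A" using EA unfolding elem_abelian_preimage_def by auto
lemma A_mul: "a \<in> A \<Longrightarrow> b \<in> A \<Longrightarrow> a ** b \<in> A" using EA unfolding elem_abelian_preimage_def by auto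
lemma A_pow: "a \<in> A \<Longrightarrow> is_scalar (mpow a p)" using EA unfolding elem_abelian_preimage_def by auto
lemma A_fin: "\<exists>F. finite F \<and> A = {mat c ** f | c f. c \<noteq> 0 \<and> f \<in> F}" using EA unfolding elem_abelian_preimage_def by auto

lemma A_mpow: "a \<in> A \<Longrightarrow> mpow a k \<in> A"
  by (induction k) (auto simp: A_mat A_mul)

lemma dg_mult: "dg (a ** b) = dg a ** dg b"
proof -
  have "dg a ** dg b = g ** a ** (gi ** g) ** b ** gi" unfolding dg_def by (simp add: matrix_mul_assoc)
  thus ?thesis unfolding dg_def g_lr by (simp add: matrix_mul_assoc)
qed

lemma dg_mat: "dg (mat c) = mat c"
  unfolding dg_def by (metis g_lr(1) mat_comm matrix_mul_assoc matrix_mul_lid)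

lemma undg: "gi ** dg a ** g = a"
  unfolding dg_def by (simp add: matrix_mul_assoc g_lr) (simp add: matrix_mul_assoc[symmetric] g_lr)

lemma gi_inv: "invertible gi" unfolding invertible_def using g_lr by blast

lemma dg_diag: "a \<in> A \<Longrightarrow> diagonal_mat (dg a)" using gdiag unfolding dg_def gi_def by auto
lemma dg_inv: "a \<in> A \<Longrightarrow> invertible (dg a)"
  unfolding dg_def by (intro invertible_mult ginv gi_inv A_inv)
lemma dg_nz: "a \<in> A \<Longrightarrow> dg a $ i $ i \<noteq> 0" using diag_inv_nz dg_diag dg_inv by blast

lemma dg_mult_entry: "a \<in> A \<Longrightarrow> dg (a ** b) $ i $ i = dg a $ i $ i * dg b $ i $ i"
  unfolding dg_mult using dg_diag diag_left by blast

lemma nu_mult: "a \<in> A \<Longrightarrow> b \<in> A \<Longrightarrow> nu (a ** b) = nu a * nu b"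
  unfolding nu_def by (simp add: vec_eq_iff dg_mult_entry)

lemma nu_scal: "c \<noteq> 0 \<Longrightarrow> nu (mat c ** a) = nu a"
  unfolding nu_def dg_mult dg_mat by (simp add: vec_eq_iff mat_mult_entry)

lemma nu_one: "nu (mat 1) = 1"
  unfolding nu_def dg_mat by (simp add: vec_eq_iff mat_def)

lemma nu_i0: "a \<in> A \<Longrightarrow> nu a $ i0 = 1"
  unfolding nu_def using dg_nz by simp

lemma nu_eq:
  assumes a: "a \<in> A" and b: "b \<in> A" and e: "nu a = nu b"
  shows "\<exists>c. a = mat c ** b"
proof -
  define k where "k = dg a $ i0 $ i0 / dg b $ i0 $ i0"
  have "dg a $ i $ i = k * dg b $ i $ i" for i
  proof -
    have "dg a $ i $ i / dg a $ i0 $ i0 = dg b $ i $ i / dg b $ i0 $ i0"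
      using arg_cong[OF e, of "\<lambda>v. v $ i"] unfolding nu_def by simp
    thus ?thesis unfolding k_def using dg_nz[OF a] dg_nz[OF b] by (simp add: field_simps)
  qed
  hence "dg a = mat k ** dg b"
    using dg_diag[OF a] dg_diag[OF b] unfolding diagonal_mat_def
    by (simp add: vec_eq_iff mat_mult_entry) (metis mult_zero_right)
  hence "gi ** dg a ** g = mat k ** (gi ** dg b ** g)"
    by (metis mat_comm matrix_mul_assoc)
  thus ?thesis unfolding undg by blast
qed

lemma pow_scalar: "a \<in> A \<Longrightarrow> \<exists>s. s \<noteq> 0 \<and> mpow a p = mat s \<and> (\<forall>i. (dg a $ i $ i)^p = s)"
proof -
  assume a: "a \<in> A"
  obtain s where s: "mpow a p = mat s" using A_pow[OF a] unfolding is_scalar_def by blast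
  have dgp: "dg (mpow a k) = mpow (dg a) k" for k
    by (induction k) (simp_all add: dg_mat dg_mult)
  have "mpow (dg a) p = mat s" using dgp[of p] s dg_mat by simp
  hence "(dg a $ i $ i)^p = s" for i using mpow_diag[OF dg_diag[OF a], of p] by (simp add: mat_def)
  moreover have "s \<noteq> 0" using calculation[of i0] dg_nz[OF a, of i0] by (metis power_not_zero)
  ultimately show ?thesis using s by blast
qed

lemma nu_pow: "a \<in> A \<Longrightarrow> (nu a) ^ p = 1"
proof -
  assume a: "a \<in> A"
  obtain s where s: "s \<noteq> 0" "\<forall>i. (dg a $ i $ i)^p = s" using pow_scalar[OF a] by blast
  show ?thesis unfolding nu_def by (simp add: vec_eq_iff vec_pow_nth power_divide s)
qed

lemma nu_nz: "a \<in> A \<Longrightarrow> nu a $ i \<noteq> 0"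
  unfolding nu_def using dg_nz by simp

lemma nu_mpow: "a \<in> A \<Longrightarrow> nu (mpow a k) = (nu a)^k"
  by (induction k) (simp_all add: nu_one nu_mult A_mpow)

lemma F_sub: "\<exists>F. finite F \<and> nu ` A \<subseteq> nu ` F"
proof -
  obtain F where F: "finite F" "A = {mat c ** f | c f. c \<noteq> 0 \<and> f \<in> F}" using A_fin by blast
  have "nu ` A \<subseteq> nu ` F" using F(2) nu_scal by auto
  thus ?thesis using F(1) by blast
qed

lemma pgrp_G: "pgrp (nu ` A) p"
proof
  show "finite (nu ` A)" using F_sub by (meson finite_imageI finite_subset)
  show "1 \<in> nu ` A" using nu_one A_mat[of 1] by force
  show "u * v \<in> nu ` A" if uv: "u \<in> nu ` A" "v \<in> nu ` A" for u v
  proof -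
    obtain a b where "a \<in> A" "b \<in> A" "u = nu a" "v = nu b" using uv by blast
    thus ?thesis using nu_mult A_mul by (metis image_eqI)
  qed
  show "u ^ p = 1" if "u \<in> nu ` A" for u using that nu_pow by auto
  show "prime p" by (rule pr)
qed

lemma trace_nu: "a \<in> A \<Longrightarrow> (\<Sum>j\<in>UNIV. nu a $ j) = trace a / dg a $ i0 $ i0"
proof -
  assume a: "a \<in> A"
  have "trace (dg a) = trace a" unfolding dg_def
    by (metis g_lr(2) matrix_mul_assoc matrix_mul_lid trace_mul_sym)
  thus ?thesis unfolding nu_def trace_def by (simp add: sum_divide_distrib[symmetric])
qed

end



context msetup begin

lemma foldr_nu: "(\<forall>M\<in>set Ms. M \<in> A) \<Longrightarrow> foldr (**) Ms (mat 1) \<in> A \<and> nu (foldr (**) Ms (mat 1)) = prod_list (map nu Ms)"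
  by (induction Ms) (auto simp: A_mat A_mul nu_one nu_mult)

lemma basis_case:
  assumes dv: "p dvd CARD('n)"
    and cs: "set cs \<subseteq> {u \<in> nu ` A. (\<Sum>j\<in>UNIV. u$j) \<noteq> 0}" "indep p cs" "nu ` A \<subseteq> spn p cs"
  shows "\<exists>bs. Fp_basis p A bs \<and> (\<forall>b\<in>set bs. \<not> conj_to_e p b)"
proof -
  define rep where "rep u = (SOME a. a \<in> A \<and> nu a = u)" for u
  have rep: "rep u \<in> A \<and> nu (rep u) = u" if "u \<in> nu ` A" for u
    unfolding rep_def using that by (metis (mono_tags, lifting) image_iff someI_ex)
  define bs where "bs = map rep cs"
  have L: "length bs = length cs" unfolding bs_def by simp
  have bsA: "set bs \<subseteq> A" unfolding bs_def using cs(1) rep by auto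
  have bsnu: "nu (bs ! i) = cs ! i" if "i < length cs" for i
    unfolding bs_def using that rep cs(1) nth_mem by fastforce
  define PR where "PR m = foldr (**) (map (\<lambda>i. mpow (bs ! i) (m i)) [0..<length bs]) (mat 1)" for m
  have PR: "PR m \<in> A \<and> nu (PR m) = lprod cs m" for m
  proof -
    have all: "\<forall>M\<in>set (map (\<lambda>i. mpow (bs ! i) (m i)) [0..<length bs]). M \<in> A"
      using bsA by (auto intro!: A_mpow)
    have mp: "nu (mpow (bs ! i) (m i)) = (cs ! i) ^ (m i)" if "i < length cs" for i
    proof -
      have "bs ! i \<in> A" using bsA L that nth_mem by (metis subsetD)
      thus ?thesis using nu_mpow bsnu[OF that] by simp
    qed
    have "prod_list (map nu (map (\<lambda>i. mpow (bs ! i) (m i)) [0..<length bs]))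
        = prod_list (map (\<lambda>i. (cs ! i) ^ (m i)) [0..<length cs])"
      unfolding L[symmetric] map_map o_def
      by (intro arg_cong[where f=prod_list] map_cong refl)
         (simp add: mp L)
    thus ?thesis using foldr_nu[OF all] unfolding PR_def lprod_def prod_list_upt by simp
  qed
  have nz: "a \<in> A \<Longrightarrow> a = mat c ** M \<Longrightarrow> c \<noteq> 0" for a c M
    using inv_nonzero[OF A_inv] by fastforce
  have "Fp_basis p A bs"
    unfolding Fp_basis_def
  proof (intro conjI ballI)
    show "set bs \<subseteq> A" by fact
    fix a assume a: "a \<in> A"
    have "nu a \<in> spn p cs" using cs(3) a by auto
    then obtain m where m: "bnd p (length cs) m" "lprod cs m = nu a" unfolding spn_def by auto
    have ex: "\<exists>c. a = mat c ** PR m" using nu_eq[OF a, of "PR m"] PR[of m] m by auto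
    show "\<exists>!m. (\<forall>i. (i < length bs \<longrightarrow> m i < p) \<and> (length bs \<le> i \<longrightarrow> m i = 0)) \<and>
             (\<exists>c. a = mat c ** foldr (**) (map (\<lambda>i. mpow (bs ! i) (m i)) [0..<length bs]) (mat 1))"
    proof (rule ex1I[of _ m])
      show "(\<forall>i. (i < length bs \<longrightarrow> m i < p) \<and> (length bs \<le> i \<longrightarrow> m i = 0)) \<and>
             (\<exists>c. a = mat c ** foldr (**) (map (\<lambda>i. mpow (bs ! i) (m i)) [0..<length bs]) (mat 1))"
        using m(1) ex unfolding bnd_def PR_def L by simp
    next
      fix m' assume "(\<forall>i. (i < length bs \<longrightarrow> m' i < p) \<and> (length bs \<le> i \<longrightarrow> m' i = 0)) \<and>
             (\<exists>c. a = mat c ** foldr (**) (map (\<lambda>i. mpow (bs ! i) (m' i)) [0..<length bs]) (mat 1))"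
      then obtain c where b': "bnd p (length cs) m'" and c: "a = mat c ** PR m'"
        unfolding bnd_def PR_def L by blast
      have "c \<noteq> 0" using nz[OF a c] .
      hence "nu a = lprod cs m'" using c PR[of m'] nu_scal by simp
      thus "m' = m" using cs(2) b' m unfolding indep_def by auto
    qed
  qed
  moreover have "\<forall>b\<in>set bs. \<not> conj_to_e p b"
  proof
    fix b assume "b \<in> set bs"
    then obtain u where u: "u \<in> set cs" "b = rep u" unfolding bs_def by auto
    hence uA: "u \<in> nu ` A" "(\<Sum>j\<in>UNIV. u$j) \<noteq> 0" using cs(1) by auto
    have bA: "b \<in> A" "nu b = u" using rep[OF uA(1)] u by auto
    have "trace b \<noteq> 0" using trace_nu[OF bA(1)] bA uA by auto
    thus "\<not> conj_to_e p b" using conj_trace[OF pr dv] by blast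
  qed
  ultimately show ?thesis by blast
qed

lemma no_char:
  assumes conn: "connected (centralizer_preimage A)"
    and lm: "\<forall>u\<in>nu ` A. \<forall>v\<in>nu ` A. lmb (u * v) = lmb u * lmb v" "\<forall>u\<in>nu ` A. lmb u ^ p = 1"
    and S: "\<forall>u\<in>nu ` A. (\<Sum>j\<in>UNIV. u$j) \<noteq> 0 \<longrightarrow> lmb u = 1"
    and ex: "\<exists>u\<in>nu ` A. lmb u \<noteq> (1::complex)"
  shows False
proof -
  interpret pgrp "nu ` A" p by (rule pgrp_G)
  have nzG: "\<forall>u\<in>nu ` A. \<forall>i. u$i \<noteq> 0" using nu_nz by auto
  have lnz: "\<forall>u\<in>nu ` A. lmb u \<noteq> 0" using lm(2) p_pos by (metis power_0_left less_not_refl zero_neq_one)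
  have C: "\<forall>i. card {j. \<forall>u\<in>nu ` A. u$j = lmb u * u$i} = card {j. \<forall>u\<in>nu ` A. u$j = u$i}"
    using fourier_count[OF pgrp_G nzG lm S] by blast
  obtain \<pi> where pi: "bij \<pi>" "\<forall>i. \<forall>u\<in>nu ` A. u$(\<pi> i) = lmb u * u$i"
    using perm_exists[OF lnz C] by blast
  obtain a0 where a0: "a0 \<in> A" "lmb (nu a0) \<noteq> 1" using ex by blast
  define P :: "complex^'n^'n" where "P = (\<chi> r c. if r = \<pi> c then 1 else 0)"
  define Q :: "complex^'n^'n" where "Q = (\<chi> r c. if c = \<pi> r then 1 else 0)"
  have "P ** Q = mat 1"
  proof -
    have "(P ** Q) $ r $ s = mat 1 $ r $ s" for r s
    proof -
      define k0 where "k0 = inv \<pi> r"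
      have eqk: "(r = \<pi> k) \<longleftrightarrow> (k = k0)" for k
        unfolding k0_def using pi(1) by (metis bij_inv_eq_iff)
      have "(P ** Q) $ r $ s = (\<Sum>k\<in>UNIV. (if r = \<pi> k then 1 else 0) * (if s = \<pi> k then 1 else 0))"
        unfolding matrix_matrix_mult_def P_def Q_def by simp
      also have "\<dots> = (\<Sum>k\<in>UNIV. if k = k0 then (if s = r then 1 else 0) else 0)"
        using eqk by (intro sum.cong) (auto, metis)
      also have "\<dots> = (if s = r then 1 else 0)" by simp
      finally show ?thesis by (auto simp: mat_def)
    qed
    thus ?thesis by (simp add: vec_eq_iff)
  qed
  hence Pinv: "invertible P" using invertible_right_inverse by blast
  have key: "dg a ** P = mat (lmb (nu a)) ** (P ** dg a)" if a: "a \<in> A" for a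
  proof -
    have "(dg a ** P) $ r $ c = (mat (lmb (nu a)) ** (P ** dg a)) $ r $ c" for r c
    proof -
      have e: "nu a $ (\<pi> c) = lmb (nu a) * nu a $ c" using pi(2) a by blast
      have "dg a $ (\<pi> c) $ (\<pi> c) = lmb (nu a) * dg a $ c $ c"
        using e dg_nz[OF a, of i0] unfolding nu_def by (simp add: field_simps)
      thus ?thesis
        unfolding mat_mult_entry diag_left[OF dg_diag[OF a]] diag_right[OF dg_diag[OF a]]
        by (auto simp: P_def)
    qed
    thus ?thesis by (simp add: vec_eq_iff)
  qed
  define x where "x = gi ** P ** g"
  have xinv: "invertible x" unfolding x_def by (intro invertible_mult gi_inv Pinv ginv)
  have xa: "x ** a = mat (1 / lmb (nu a)) ** (a ** x)" if a: "a \<in> A" for a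
  proof -
    have l: "lmb (nu a) \<noteq> 0" using lnz a by auto
    have ga: "g ** a = dg a ** g" unfolding dg_def
      by (metis g_lr(2) matrix_mul_assoc matrix_mul_rid)
    have agi: "a ** gi = gi ** dg a" unfolding dg_def
      by (metis g_lr(2) matrix_mul_assoc matrix_mul_lid)
    have xa1: "x ** a = gi ** (P ** dg a) ** g" unfolding x_def
      by (metis ga matrix_mul_assoc)
    have "a ** x = gi ** (dg a ** P) ** g" unfolding x_def
      by (metis agi matrix_mul_assoc)
    also have "\<dots> = gi ** (mat (lmb (nu a)) ** (P ** dg a)) ** g" using key[OF a] by simp
    also have "\<dots> = mat (lmb (nu a)) ** (x ** a)" unfolding xa1
      by (metis mat_comm matrix_mul_assoc)
    finally have "mat (1 / lmb (nu a)) ** (a ** x) = mat (1 / lmb (nu a)) ** mat (lmb (nu a)) ** (x ** a)"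
      by (simp add: matrix_mul_assoc)
    also have "\<dots> = x ** a" using l by (simp add: mat_mat)
    finally show ?thesis by simp
  qed
  define CA where "CA = centralizer_preimage A"
  have xC: "x \<in> CA" unfolding CA_def centralizer_preimage_def using xinv xa by blast
  have oneC: "mat 1 \<in> CA" unfolding CA_def centralizer_preimage_def invertible_def
    by (auto intro: exI[of _ 1])
  define Z where "Z = {z::complex. z ^ p = 1 \<and> z \<noteq> 1}"
  have finZ: "finite Z" unfolding Z_def
    using finite_roots_unity[of p] p_pos by (auto intro: rev_finite_subset)
  define e1 where "e1 = {y::complex^'n^'n. y ** a0 = mat 1 ** (a0 ** y)}"
  define e2 where "e2 = (\<Union>z\<in>Z. {y::complex^'n^'n. y ** a0 = mat z ** (a0 ** y)})"
  have cl1: "closed e1" unfolding e1_def by (rule closed_comm_set)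
  have cl2: "closed e2" unfolding e2_def using finZ closed_comm_set by (intro closed_UN) auto
  have cover: "CA \<subseteq> e1 \<union> e2"
  proof
    fix y assume "y \<in> CA"
    hence y: "invertible y" "\<exists>c. y ** a0 = mat c ** (a0 ** y)"
      unfolding CA_def centralizer_preimage_def using a0 by auto
    then obtain c where c: "y ** a0 = mat c ** (a0 ** y)" by blast
    obtain s where s: "s \<noteq> 0" "mpow a0 p = mat s" using pow_scalar[OF a0(1)] by blast
    have "y ** mat s = mat (c^p) ** (mat s ** y)" using mpow_comm[OF c, of p] s by simp
    hence "mat s ** y = mat (c^p) ** (mat s ** y)" using mat_comm[of s y] by simp
    also have "\<dots> = mat (c^p * s) ** y" by (simp add: matrix_mul_assoc mat_mat)
    finally have "mat s ** y = mat (c^p * s) ** y" .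
    hence "s = c^p * s" using scalar_eq_cancel[OF y(1)] by blast
    hence cp: "c^p = 1" using s by simp
    show "y \<in> e1 \<union> e2"
    proof (cases "c = 1")
      case True thus ?thesis using c unfolding e1_def by auto
    next
      case False thus ?thesis using c cp unfolding e2_def Z_def by auto
    qed
  qed
  have disj: "e1 \<inter> e2 \<inter> CA = {}"
  proof (rule ccontr)
    assume "e1 \<inter> e2 \<inter> CA \<noteq> {}"
    then obtain y z where y: "y ** a0 = mat 1 ** (a0 ** y)" "z \<in> Z" "y ** a0 = mat z ** (a0 ** y)" "y \<in> CA"
      unfolding e1_def e2_def by blast
    have "invertible (a0 ** y)" using y(4) A_inv[OF a0(1)] unfolding CA_def centralizer_preimage_def
      by (auto intro: invertible_mult)
    hence "1 = z" using scalar_eq_cancel y by metis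
    thus False using y(2) unfolding Z_def by auto
  qed
  have "mat 1 \<in> e1" unfolding e1_def by simp
  hence ne1: "e1 \<inter> CA \<noteq> {}" using oneC by blast
  have ne2: "e2 \<inter> CA \<noteq> {}"
  proof -
    define z where "z = 1 / lmb (nu a0)"
    have "z \<in> Z" unfolding Z_def z_def using lm(2) a0 by (auto simp: power_divide)
    moreover have "x ** a0 = mat z ** (a0 ** x)" using xa[OF a0(1)] unfolding z_def .
    ultimately show ?thesis using xC unfolding e2_def by blast
  qed
  show False using conn[folded CA_def] cl1 cl2 cover disj ne1 ne2 unfolding connected_closed by blast
qed

end


theorem theorem4p31:
  fixes p :: nat and A :: "(complex^'n^'n) set"
  assumes "prime p" and "odd p" and "p dvd CARD('n)"
    and "elem_abelian_preimage p A"
    and "toral A"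
    and "connected (centralizer_preimage A)"
  shows "\<exists>bs. Fp_basis p A bs \<and> (\<forall>b\<in>set bs. \<not> conj_to_e p b)"
proof -
  obtain g :: "complex^'n^'n" where g: "invertible g" "\<forall>a\<in>A. diagonal_mat (g ** a ** matrix_inv g)"
    using assms(5) unfolding toral_def by blast
  interpret msetup p A g using assms(1,4) g by unfold_locales auto
  interpret pgrp "nu ` A" p by (rule pgrp_G)
  define \<omega> where "\<omega> = exp (2 * pi * \<i> / of_nat p)"
  have om: "\<omega> ^ p = 1" "\<omega> \<noteq> 1" using omega_props[OF assms(1)] unfolding \<omega>_def by auto
  define T0 where "T0 = {u \<in> nu ` A. (\<Sum>j\<in>UNIV. u$j) \<noteq> 0}"
  have T0: "T0 \<subseteq> nu ` A" unfolding T0_def by auto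
  from basis_or_char[OF T0 om] show ?thesis
  proof
    assume "\<exists>cs. set cs \<subseteq> T0 \<and> indep p cs \<and> nu ` A \<subseteq> spn p cs"
    then obtain cs where "set cs \<subseteq> T0" "indep p cs" "nu ` A \<subseteq> spn p cs" by blast
    thus ?thesis using basis_case[OF assms(3)] unfolding T0_def by blast
  next
    assume "\<exists>lmb::complex^'n \<Rightarrow> complex. (\<forall>u\<in>nu ` A. \<forall>v\<in>nu ` A. lmb (u * v) = lmb u * lmb v) \<and>
       (\<forall>u\<in>nu ` A. lmb u ^ p = 1) \<and> (\<forall>u\<in>T0. lmb u = 1) \<and> (\<exists>u\<in>nu ` A. lmb u \<noteq> 1)"
    then obtain lmb :: "complex^'n \<Rightarrow> complex" where l:
      "\<forall>u\<in>nu ` A. \<forall>v\<in>nu ` A. lmb (u * v) = lmb u * lmb v" "\<forall>u\<in>nu ` A. lmb u ^ p = 1"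
      "\<forall>u\<in>T0. lmb u = 1" "\<exists>u\<in>nu ` A. lmb u \<noteq> 1" by blast
    have "\<forall>u\<in>nu ` A. (\<Sum>j\<in>UNIV. u$j) \<noteq> 0 \<longrightarrow> lmb u = 1" using l(3) unfolding T0_def by blast
    from no_char[OF assms(6) l(1) l(2) this l(4)] show ?thesis ..
  qed
qed

end
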